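(* The graphs $\mathbf{X}_6$ and $\mathbf{X}_7$ are not block decomposable. In particular, they are not of geometric type (they do not arise from triangulations of bordered oriented surfaces with marked points).
   Context: A graph here is a finite directed multigraph with no loops and no oriented $2$-cycles. $\mathbf{X}_6$: vertices $x,w,y_1,z_1,y_2,z_2$; for $i=1,2$: two arrows $y_i\to z_i$, one arrow $z_i\to x$, one arrow $x\to y_i$; plus one arrow $w\to x$. $\mathbf{X}_7$: vertices $x,y_i,z_i$ ($i=1,2,3$); for each $i$: two arrows $y_i\to z_i$, one arrow $z_i\to x$, one arrow $x\to y_i$. Blocks: each block is a small graph whose vertices are marked either open or closed; all arrows single. I: open $a\to$ open $b$. II: open vertices $a,b,c$ with $a\to b\to c\to a$. IIIa: open $o$ and closed $s_1,s_2$ with $s_1\to o$, $s_2\to o$. IIIb: open $o$ and closed $s_1,s_2$ with $o\to s_1$, $o\to s_2$. IV: open $l,r$, closed $t,s$, arrows $l\to t$, $t\to r$, $l\to s$, $s\to r$, $r\to l$. V: open $c$, closed $A,B,C,D$, arrows $A\to c$, $c\to B$, $B\to A$, $c\to C$, $C\to D$, $D\to c$, $B\to D$, $C\to A$. A graph is block decomposable if it can be obtained as follows: take a disjoint union of finitely many blocks (each type may occur any number of times), choose a partial matching of the open vertices in which no vertex is matched to a vertex of the same block, identify matched vertices, and then, whenever two vertices $u,v$ have an arrow $u\to v$ and an arrow $v\to u$, delete both arrows (repeating until no such pairs remain). A graph is called of geometric type if it comes from a triangulation of a bordered oriented surface with marked points in the sense of Fomin–Shapiro–Thurston; by their work this is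 equivalent to being block decomposable. *)

theory Defs
  imports Main
begin

text \<open>A graph (finite directed multigraph) on a vertex type 'v is given by its
arrow-multiplicity function: m u v = number of arrows u -> v. The whole type
'v is the vertex set.\<close>

datatype btype = BI | BII | BIIIa | BIIIb | BIV | BV

fun block_verts :: "btype \<Rightarrow> nat set" where
  "block_verts BI = {0,1}"
| "block_verts BII = {0,1,2}"
| "block_verts BIIIa = {0,1,2}"
| "block_verts BIIIb = {0,1,2}"
| "block_verts BIV = {0,1,2,3}"
| "block_verts BV = {0,1,2,3,4}"

text \<open>Open vertices:
 I: a=0,b=1 open.  II: a=0,b=1,c=2 open.
 IIIa/IIIb: o=0 open, s1=1, s2=2 closed.
 IV: l=0, r=1 open, t=2, s=3 closed.
 V: c=0 open, A=1,B=2,C=3,D=4 closed.\<close>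

fun block_open :: "btype \<Rightarrow> nat \<Rightarrow> bool" where
  "block_open BI k = (k \<in> {0,1})"
| "block_open BII k = (k \<in> {0,1,2})"
| "block_open BIIIa k = (k = 0)"
| "block_open BIIIb k = (k = 0)"
| "block_open BIV k = (k \<in> {0,1})"
| "block_open BV k = (k = 0)"

fun block_edge :: "btype \<Rightarrow> nat \<Rightarrow> nat \<Rightarrow> bool" where
  "block_edge BI a b = ((a,b) = (0,1))"
| "block_edge BII a b = ((a,b) \<in> {(0,1),(1,2),(2,0)})"
| "block_edge BIIIa a b = ((a,b) \<in> {(1,0),(2,0)})"
| "block_edge BIIIb a b = ((a,b) \<in> {(0,1),(0,2)})"
| "block_edge BIV a b = ((a,b) \<in> {(0,2),(2,1),(0,3),(3,1),(1,0)})"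
| "block_edge BV a b = ((a,b) \<in> {(1,0),(0,2),(2,1),(0,3),(3,4),(4,0),(2,4),(3,1)})"

definition union_verts :: "btype list \<Rightarrow> (nat \<times> nat) set" where
  "union_verts bs = {(i,k). i < length bs \<and> k \<in> block_verts (bs ! i)}"

text \<open>Number of arrows u -> v in the glued graph before cancelling 2-cycles,
where \<pi> identifies vertices of the disjoint union with vertices of the result.\<close>

definition glued_arrows :: "btype list \<Rightarrow> (nat \<times> nat \<Rightarrow> 'v) \<Rightarrow> 'v \<Rightarrow> 'v \<Rightarrow> nat" where
  "glued_arrows bs \<pi> u v =
     card {(i,a,b). i < length bs \<and> block_edge (bs ! i) a b \<and> \<pi> (i,a) = u \<and> \<pi> (i,b) = v}"

text \<open>\<pi> describes the identification along a partial matching of open vertices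
(no vertex matched to a vertex of the same block): \<pi> is onto the vertex type,
each fibre has at most two elements, and two distinct identified vertices are
both open and lie in different blocks. The fibres of \<pi> are the vertices of the
glued graph, so \<pi> also encodes the isomorphism with the target graph.\<close>

definition matching_identification :: "btype list \<Rightarrow> (nat \<times> nat \<Rightarrow> 'v) \<Rightarrow> bool" where
  "matching_identification bs \<pi> \<longleftrightarrow>
     \<pi> ` union_verts bs = UNIV \<and>
     (\<forall>v. card {p \<in> union_verts bs. \<pi> p = v} \<le> 2) \<and>
     (\<forall>p \<in> union_verts bs. \<forall>q \<in> union_verts bs. p \<noteq> q \<and> \<pi> p = \<pi> q \<longrightarrow>
         block_open (bs ! fst p) (snd p) \<and> block_open (bs ! fst q) (snd q) \<and> fst p \<noteq> fst q)"

text \<open>Repeatedly deleting pairs of opposite arrows u->v, v->u leaves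
max 0 (n(u,v) - n(v,u)) arrows u->v (truncated nat subtraction).\<close>

definition block_decomposable :: "('v \<Rightarrow> 'v \<Rightarrow> nat) \<Rightarrow> bool" where
  "block_decomposable m \<longleftrightarrow>
     (\<exists>bs \<pi>. matching_identification bs \<pi> \<and>
        (\<forall>u. m u u = 0) \<and>
        (\<forall>u v. u \<noteq> v \<longrightarrow> m u v = glued_arrows bs \<pi> u v - glued_arrows bs \<pi> v u))"

datatype x6v = X6x | X6w | X6y1 | X6z1 | X6y2 | X6z2

fun X6 :: "x6v \<Rightarrow> x6v \<Rightarrow> nat" where
  "X6 X6y1 X6z1 = 2"
| "X6 X6z1 X6x = 1"
| "X6 X6x X6y1 = 1"
| "X6 X6y2 X6z2 = 2"
| "X6 X6z2 X6x = 1"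
| "X6 X6x X6y2 = 1"
| "X6 X6w X6x = 1"
| "X6 _ _ = 0"

datatype x7v = X7x | X7y1 | X7z1 | X7y2 | X7z2 | X7y3 | X7z3

fun X7 :: "x7v \<Rightarrow> x7v \<Rightarrow> nat" where
  "X7 X7y1 X7z1 = 2"
| "X7 X7z1 X7x = 1"
| "X7 X7x X7y1 = 1"
| "X7 X7y2 X7z2 = 2"
| "X7 X7z2 X7x = 1"
| "X7 X7x X7y2 = 1"
| "X7 X7y3 X7z3 = 2"
| "X7 X7z3 X7x = 1"
| "X7 X7x X7y3 = 1"
| "X7 _ _ = 0"

end

theory Submission
  imports Defs
begin

lemma bv_bound: "k \<in> block_verts t \<Longrightarrow> k \<le> 4" by (cases t) auto
lemma be_verts: "block_edge t a b \<Longrightarrow> a \<in> block_verts t \<and> b \<in> block_verts t" by (cases t) auto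
lemma bo_bound: "block_open t k \<Longrightarrow> k \<le> 2" by (cases t) auto
lemma bo_BII: "block_open t a \<Longrightarrow> block_open t b \<Longrightarrow> block_open t c \<Longrightarrow> a\<noteq>b \<Longrightarrow> a\<noteq>c \<Longrightarrow> b\<noteq>c \<Longrightarrow> t = BII"
  by (cases t) auto

lemma uv_finite: "finite (union_verts bs)"
  by (rule finite_subset[of _ "{..<length bs} \<times> {..4::nat}"]) (auto simp: union_verts_def dest: bv_bound)

lemma uv_mem: "(i,k) \<in> union_verts bs \<longleftrightarrow> i < length bs \<and> k \<in> block_verts (bs!i)"
  by (simp add: union_verts_def)

lemma three_blocks:
  assumes MI: "matching_identification bs \<pi>"
    and "(i,a) \<in> union_verts bs" "(j,b) \<in> union_verts bs" "(l,c) \<in> union_verts bs"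
    and "\<pi>(i,a) = v" "\<pi>(j,b) = v" "\<pi>(l,c) = v" "i \<noteq> j"
  shows "l = i \<or> l = j"
proof (rule ccontr)
  assume "\<not> ?thesis"
  hence "card {(i,a),(j,b),(l,c)} = 3" using \<open>i\<noteq>j\<close> by auto
  moreover have "{(i,a),(j,b),(l,c)} \<subseteq> {p \<in> union_verts bs. \<pi> p = v}" using assms by auto
  moreover have "finite {p \<in> union_verts bs. \<pi> p = v}" using uv_finite by auto
  ultimately have "3 \<le> card {p \<in> union_verts bs. \<pi> p = v}" by (metis card_mono)
  moreover have "card {p \<in> union_verts bs. \<pi> p = v} \<le> 2" using MI unfolding matching_identification_def by blast
  ultimately show False by linarith
qed

lemma MI3:
  assumes MI: "matching_identification bs \<pi>"
    and "p \<in> union_verts bs" "q \<in> union_verts bs" "p \<noteq> q" "\<pi> p = \<pi> q"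
  shows "block_open (bs ! fst p) (snd p) \<and> block_open (bs ! fst q) (snd q) \<and> fst p \<noteq> fst q"
proof -
  have "\<forall>p \<in> union_verts bs. \<forall>q \<in> union_verts bs. p \<noteq> q \<and> \<pi> p = \<pi> q \<longrightarrow>
         block_open (bs ! fst p) (snd p) \<and> block_open (bs ! fst q) (snd q) \<and> fst p \<noteq> fst q"
    using MI by (simp add: matching_identification_def)
  thus ?thesis using assms by blast
qed

lemma same_block:
  assumes MI: "matching_identification bs \<pi>"
    and "(i,a) \<in> union_verts bs" "(i,b) \<in> union_verts bs" "\<pi>(i,a) = \<pi>(i,b)"
  shows "a = b"
  using MI3[OF MI assms(2,3)] assms by auto

lemma open_two:
  assumes MI: "matching_identification bs \<pi>"
    and "(i,a) \<in> union_verts bs" "(j,b) \<in> union_verts bs" "\<pi>(i,a) = \<pi>(j,b)" "i \<noteq> j"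
  shows "block_open (bs!i) a"
  using MI3[OF MI assms(2,3)] assms by auto

lemma glued_pos:
  assumes "glued_arrows bs \<pi> u v \<noteq> 0"
  shows "\<exists>k e f. k < length bs \<and> block_edge (bs!k) e f \<and> \<pi>(k,e)=u \<and> \<pi>(k,f)=v"
proof -
  let ?S = "{(i,a,b). i < length bs \<and> block_edge (bs ! i) a b \<and> \<pi> (i,a) = u \<and> \<pi> (i,b) = v}"
  have "?S \<noteq> {}" using assms unfolding glued_arrows_def by (metis card.empty)
  then obtain t where "t \<in> ?S" by blast
  then show ?thesis by (cases t) auto
qed

lemma glued_two:
  assumes MI: "matching_identification bs \<pi>" and g: "glued_arrows bs \<pi> u v \<ge> 2"
  shows "\<exists>i j a b c d. i \<noteq> j \<and> i < length bs \<and> j < length bs \<and> block_edge (bs!i) a b \<and>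
     block_edge (bs!j) c d \<and> \<pi>(i,a)=u \<and> \<pi>(i,b)=v \<and> \<pi>(j,c)=u \<and> \<pi>(j,d)=v"
proof -
  let ?S = "{(i,a,b). i < length bs \<and> block_edge (bs ! i) a b \<and> \<pi> (i,a) = u \<and> \<pi> (i,b) = v}"
  have c: "card ?S \<ge> 2" using g unfolding glued_arrows_def by simp
  have fin: "finite ?S"
  proof (rule ccontr)
    assume "infinite ?S" hence "card ?S = 0" by simp
    thus False using c by simp
  qed
  have "0 < card ?S" using c by linarith
  hence "?S \<noteq> {}" using card_gt_0_iff by blast
  then obtain t1 where t1: "t1 \<in> ?S" by blast
  have "card (?S - {t1}) \<ge> 1" using c fin t1 by (simp add: card_Diff_singleton)
  hence "0 < card (?S - {t1})" by linarith
  hence "?S - {t1} \<noteq> {}" using card_gt_0_iff by blast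
  then obtain t2 where t2: "t2 \<in> ?S" "t2 \<noteq> t1" by blast
  obtain i a b where e1: "t1 = (i,a,b)" by (cases t1) auto
  obtain j c d where e2: "t2 = (j,c,d)" by (cases t2) auto
  have h1: "i < length bs" "block_edge (bs!i) a b" "\<pi>(i,a)=u" "\<pi>(i,b)=v" using t1 e1 by auto
  have h2: "j < length bs" "block_edge (bs!j) c d" "\<pi>(j,c)=u" "\<pi>(j,d)=v" using t2 e2 by auto
  have "i \<noteq> j"
  proof
    assume ij: "i = j"
    have u: "(i,a) \<in> union_verts bs" "(i,b) \<in> union_verts bs" "(i,c) \<in> union_verts bs" "(i,d) \<in> union_verts bs"
      using h1 h2 ij be_verts[OF h1(2)] be_verts[of "bs!j" c d] by (simp_all add: uv_mem)
    have "a = c" using same_block[OF MI u(1) u(3)] h1 h2 ij by simp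
    moreover have "b = d" using same_block[OF MI u(2) u(4)] h1 h2 ij by simp
    ultimately show False using t2 e1 e2 ij by simp
  qed
  thus ?thesis using h1 h2 by blast
qed

lemma group:
  assumes MI: "matching_identification bs \<pi>"
    and D: "\<forall>u v. u \<noteq> v \<longrightarrow> m u v = glued_arrows bs \<pi> u v - glued_arrows bs \<pi> v u"
    and yz: "m y z = 2" and xy: "m x y \<ge> 1" and "x \<noteq> y" "y \<noteq> z"
  shows "\<exists>k e p q. (k,e) \<in> union_verts bs \<and> (k,p) \<in> union_verts bs \<and> (k,q) \<in> union_verts bs \<and>
     \<pi>(k,e)=x \<and> \<pi>(k,p)=y \<and> \<pi>(k,q)=z \<and> block_open (bs!k) p \<and> block_open (bs!k) q"
proof -
  have "glued_arrows bs \<pi> y z \<ge> 2" using D yz \<open>y\<noteq>z\<close> by (metis diff_le_self)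
  then obtain i j a b c d where h: "i \<noteq> j" "i < length bs" "j < length bs" "block_edge (bs!i) a b"
     "block_edge (bs!j) c d" "\<pi>(i,a)=y" "\<pi>(i,b)=z" "\<pi>(j,c)=y" "\<pi>(j,d)=z"
    using glued_two[OF MI] by blast
  have hu: "(i,a) \<in> union_verts bs" "(i,b) \<in> union_verts bs" "(j,c) \<in> union_verts bs" "(j,d) \<in> union_verts bs"
    using h be_verts uv_mem by metis+
  have "glued_arrows bs \<pi> x y \<noteq> 0" using D xy \<open>x\<noteq>y\<close> by fastforce
  then obtain k e f where g: "k < length bs" "block_edge (bs!k) e f" "\<pi>(k,e)=x" "\<pi>(k,f)=y"
    using glued_pos[OF \<open>glued_arrows bs \<pi> x y \<noteq> 0\<close>] by blast
  have gu: "(k,e) \<in> union_verts bs" "(k,f) \<in> union_verts bs" using g be_verts uv_mem by metis+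
  have "k = i \<or> k = j" using three_blocks[OF MI hu(1) hu(3) gu(2)] h g by simp
  thus ?thesis
  proof
    assume "k = i"
    moreover have "block_open (bs!i) a" using open_two[OF MI hu(1) hu(3)] h by simp
    moreover have "block_open (bs!i) b" using open_two[OF MI hu(2) hu(4)] h by simp
    ultimately show ?thesis using hu gu g h by blast
  next
    assume "k = j"
    moreover have "block_open (bs!j) c" using open_two[OF MI hu(3) hu(1)] h by simp
    moreover have "block_open (bs!j) d" using open_two[OF MI hu(4) hu(2)] h by simp
    ultimately show ?thesis using hu gu g h by blast
  qed
qed

lemma four_open:
  assumes "block_open t p1" "block_open t q1" "block_open t p2" "block_open t q2"
    and "\<pi>(k,p1) = y1" "\<pi>(k,q1) = z1" "\<pi>(k,p2) = y2" "\<pi>(k,q2) = z2"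
    and "y1 \<noteq> z1" "y1 \<noteq> y2" "y1 \<noteq> z2" "z1 \<noteq> y2" "z1 \<noteq> z2" "y2 \<noteq> z2"
  shows False
proof -
  have "p1 \<noteq> q1" "p1 \<noteq> p2" "p1 \<noteq> q2" "q1 \<noteq> p2" "q1 \<noteq> q2" "p2 \<noteq> q2" using assms by auto
  moreover have "p1 \<le> 2" "q1 \<le> 2" "p2 \<le> 2" "q2 \<le> 2" using assms bo_bound by auto
  ultimately show False by linarith
qed

lemma X6_not: "\<not> block_decomposable X6"
proof
  assume "block_decomposable X6"
  then obtain bs and \<pi> :: "nat \<times> nat \<Rightarrow> x6v" where MI: "matching_identification bs \<pi>"
    and D: "\<forall>u v. u \<noteq> v \<longrightarrow> X6 u v = glued_arrows bs \<pi> u v - glued_arrows bs \<pi> v u"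
    unfolding block_decomposable_def by blast
  have "X6 X6y1 X6z1 = 2" "X6 X6x X6y1 = 1" by simp_all
  from group[OF MI D this(1)] this(2) have "\<exists>k e p q. (k,e) \<in> union_verts bs \<and> (k,p) \<in> union_verts bs \<and> (k,q) \<in> union_verts bs \<and> \<pi>(k,e)=X6x \<and> \<pi>(k,p)=X6y1 \<and> \<pi>(k,q)=X6z1 \<and> block_open (bs!k) p \<and> block_open (bs!k) q" by simp
  then obtain k1 e1 p1 q1 where G1: "(k1,e1) \<in> union_verts bs" "(k1,p1) \<in> union_verts bs" "(k1,q1) \<in> union_verts bs"
     "\<pi>(k1,e1)=X6x" "\<pi>(k1,p1)=X6y1" "\<pi>(k1,q1)=X6z1" "block_open (bs!k1) p1" "block_open (bs!k1) q1"
    by blast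
  have "X6 X6y2 X6z2 = 2" "X6 X6x X6y2 = 1" by simp_all
  from group[OF MI D this(1)] this(2) have "\<exists>k e p q. (k,e) \<in> union_verts bs \<and> (k,p) \<in> union_verts bs \<and> (k,q) \<in> union_verts bs \<and> \<pi>(k,e)=X6x \<and> \<pi>(k,p)=X6y2 \<and> \<pi>(k,q)=X6z2 \<and> block_open (bs!k) p \<and> block_open (bs!k) q" by simp
  then obtain k2 e2 p2 q2 where G2: "(k2,e2) \<in> union_verts bs" "(k2,p2) \<in> union_verts bs" "(k2,q2) \<in> union_verts bs"
     "\<pi>(k2,e2)=X6x" "\<pi>(k2,p2)=X6y2" "\<pi>(k2,q2)=X6z2" "block_open (bs!k2) p2" "block_open (bs!k2) q2"
    by blast
  have k12: "k1 \<noteq> k2"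
  proof
    assume "k1 = k2"
    thus False using four_open[of "bs!k1" p1 q1 p2 q2 \<pi> k1 X6y1 X6z1 X6y2 X6z2] G1(5-8) G2(5-8) by simp
  qed
  have o1: "block_open (bs!k1) e1" using open_two[OF MI G1(1) G2(1)] G1 G2 k12 by simp
  have o2: "block_open (bs!k2) e2" using open_two[OF MI G2(1) G1(1)] G1 G2 k12 by simp
  have d1: "e1 \<noteq> p1" "e1 \<noteq> q1" "p1 \<noteq> q1" using G1 by auto
  have d2: "e2 \<noteq> p2" "e2 \<noteq> q2" "p2 \<noteq> q2" using G2 by auto
  have B1: "bs!k1 = BII" using bo_BII[OF o1 G1(7,8) d1] .
  have B2: "bs!k2 = BII" using bo_BII[OF o2 G2(7,8) d2] .
  have "X6 X6w X6x = glued_arrows bs \<pi> X6w X6x - glued_arrows bs \<pi> X6x X6w" using D[rule_format, of X6w X6x] by simp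
  hence "glued_arrows bs \<pi> X6w X6x \<noteq> 0" by simp
  then obtain g r s where g: "g < length bs" "block_edge (bs!g) r s" "\<pi>(g,r)=X6w" "\<pi>(g,s)=X6x"
    using glued_pos[OF \<open>glued_arrows bs \<pi> X6w X6x \<noteq> 0\<close>] by blast
  have gu: "(g,r) \<in> union_verts bs" "(g,s) \<in> union_verts bs" using g be_verts uv_mem by metis+
  have "g = k1 \<or> g = k2" using three_blocks[OF MI G1(1) G2(1) gu(2)] G1 G2 g k12 by simp
  thus False
  proof
    assume gk: "g = k1"
    have "r \<in> {0,1,2}" using gu(1) gk B1 uv_mem by auto
    moreover have "e1 \<in> {0,1,2}" "p1 \<in> {0,1,2}" "q1 \<in> {0,1,2}" using G1 B1 uv_mem by auto
    ultimately have "r = e1 \<or> r = p1 \<or> r = q1" using d1 by auto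
    thus False using g G1 gk by auto
  next
    assume gk: "g = k2"
    have "r \<in> {0,1,2}" using gu(1) gk B2 uv_mem by auto
    moreover have "e2 \<in> {0,1,2}" "p2 \<in> {0,1,2}" "q2 \<in> {0,1,2}" using G2 B2 uv_mem by auto
    ultimately have "r = e2 \<or> r = p2 \<or> r = q2" using d2 by auto
    thus False using g G2 gk by auto
  qed
qed

lemma X7_not: "\<not> block_decomposable X7"
proof
  assume "block_decomposable X7"
  then obtain bs and \<pi> :: "nat \<times> nat \<Rightarrow> x7v" where MI: "matching_identification bs \<pi>"
    and D: "\<forall>u v. u \<noteq> v \<longrightarrow> X7 u v = glued_arrows bs \<pi> u v - glued_arrows bs \<pi> v u"
    unfolding block_decomposable_def by blast
  have "X7 X7y1 X7z1 = 2" "X7 X7x X7y1 = 1" by simp_all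
  from group[OF MI D this(1)] this(2) have "\<exists>k e p q. (k,e) \<in> union_verts bs \<and> (k,p) \<in> union_verts bs \<and> (k,q) \<in> union_verts bs \<and> \<pi>(k,e)=X7x \<and> \<pi>(k,p)=X7y1 \<and> \<pi>(k,q)=X7z1 \<and> block_open (bs!k) p \<and> block_open (bs!k) q" by simp
  then obtain k1 e1 p1 q1 where G1: "(k1,e1) \<in> union_verts bs" "(k1,p1) \<in> union_verts bs" "(k1,q1) \<in> union_verts bs"
     "\<pi>(k1,e1)=X7x" "\<pi>(k1,p1)=X7y1" "\<pi>(k1,q1)=X7z1" "block_open (bs!k1) p1" "block_open (bs!k1) q1"
    by blast
  have "X7 X7y2 X7z2 = 2" "X7 X7x X7y2 = 1" by simp_all
  from group[OF MI D this(1)] this(2) have "\<exists>k e p q. (k,e) \<in> union_verts bs \<and> (k,p) \<in> union_verts bs \<and> (k,q) \<in> union_verts bs \<and> \<pi>(k,e)=X7x \<and> \<pi>(k,p)=X7y2 \<and> \<pi>(k,q)=X7z2 \<and> block_open (bs!k) p \<and> block_open (bs!k) q" by simp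
  then obtain k2 e2 p2 q2 where G2: "(k2,e2) \<in> union_verts bs" "(k2,p2) \<in> union_verts bs" "(k2,q2) \<in> union_verts bs"
     "\<pi>(k2,e2)=X7x" "\<pi>(k2,p2)=X7y2" "\<pi>(k2,q2)=X7z2" "block_open (bs!k2) p2" "block_open (bs!k2) q2"
    by blast
  have "X7 X7y3 X7z3 = 2" "X7 X7x X7y3 = 1" by simp_all
  from group[OF MI D this(1)] this(2) have "\<exists>k e p q. (k,e) \<in> union_verts bs \<and> (k,p) \<in> union_verts bs \<and> (k,q) \<in> union_verts bs \<and> \<pi>(k,e)=X7x \<and> \<pi>(k,p)=X7y3 \<and> \<pi>(k,q)=X7z3 \<and> block_open (bs!k) p \<and> block_open (bs!k) q" by simp
  then obtain k3 e3 p3 q3 where G3: "(k3,e3) \<in> union_verts bs" "(k3,p3) \<in> union_verts bs" "(k3,q3) \<in> union_verts bs"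
     "\<pi>(k3,e3)=X7x" "\<pi>(k3,p3)=X7y3" "\<pi>(k3,q3)=X7z3" "block_open (bs!k3) p3" "block_open (bs!k3) q3"
    by blast
  have k12: "k1 \<noteq> k2"
  proof
    assume "k1 = k2"
    thus False using four_open[of "bs!k1" p1 q1 p2 q2 \<pi> k1 X7y1 X7z1 X7y2 X7z2] G1(5-8) G2(5-8) by simp
  qed
  have k13: "k3 \<noteq> k1"
  proof
    assume "k3 = k1"
    thus False using four_open[of "bs!k1" p1 q1 p3 q3 \<pi> k1 X7y1 X7z1 X7y3 X7z3] G1(5-8) G3(5-8) by simp
  qed
  have k23: "k3 \<noteq> k2"
  proof
    assume "k3 = k2"
    thus False using four_open[of "bs!k2" p2 q2 p3 q3 \<pi> k2 X7y2 X7z2 X7y3 X7z3] G2(5-8) G3(5-8) by simp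
  qed
  show False using three_blocks[OF MI G1(1) G2(1) G3(1)] G1 G2 G3 k12 k13 k23 by simp
qed

theorem mainTheorem3:
  shows "\<not> block_decomposable X6 \<and> \<not> block_decomposable X7"
  using X6_not X7_not by blast

end
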